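(* Let $p>2$ be prime, $\mathcal{C}$ a $\mathbb{Z}_p\mathbb{Z}_{p^2}$-additive code and $C=\Phi(\mathcal{C})$. Then $$K(C)=\{\Phi(\mathbf{u})\mid \mathbf{u}\in\mathcal{C}\ \text{and}\ pP'(\mathbf{u},\mathbf{v})\in\mathcal{C}\ \text{for all}\ \mathbf{v}\in\mathcal{C}\}.$$
   Context: A $\mathbb{Z}_p\mathbb{Z}_{p^2}$-additive code is a subgroup $\mathcal{C}$ of $\mathbb{Z}_p^\alpha\times\mathbb{Z}_{p^2}^\beta$. The Gray map $\phi:\mathbb{Z}_{p^2}\to\mathbb{Z}_p^p$ is $\phi(\theta)=\theta''(1,\ldots,1)+\theta'(0,1,\ldots,p-1)$ with $\theta=\theta''p+\theta'$, $\theta',\theta''\in\{0,\ldots,p-1\}$, and $\Phi(\mathbf{x},\mathbf{y})=(\mathbf{x},\phi(y_1),\ldots,\phi(y_\beta))$. For $C\subseteq\mathbb{Z}_p^n$, the kernel is $K(C)=\{\mathbf{x}\in\mathbb{Z}_p^n\mid C+\mathbf{x}=C\}$. For $\mathbf{u},\mathbf{v}\in\mathbb{Z}_p^\alpha\times\mathbb{Z}_{p^2}^\beta$ with $u_i=u_i''p+u_i'$, $v_i=v_i''p+v_i'$ ($u_i',v_i'\in\{0,\ldots,p-1\}$) for $i>\alpha$, $pP'(\mathbf{u},\mathbf{v})$ is the vector with zeros in the first $\alpha$ coordinates and, in coordinate $i>\alpha$, the value $p(p-1)\in\mathbb{Z}_{p^2}$ if $u_i'+v_i'\ge p$ and $0$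 otherwise. *)

theory Defs
  imports "HOL-Computational_Algebra.Primes"
begin

(* Vectors over Z_m of length n: functions nat => int with entries in {0..m-1}
   at indices < n and zero at all other indices. *)
definition vecs :: "int \<Rightarrow> nat \<Rightarrow> (nat \<Rightarrow> int) set" where
  "vecs m n = {x. (\<forall>i<n. 0 \<le> x i \<and> x i < m) \<and> (\<forall>i. n \<le> i \<longrightarrow> x i = 0)}"

definition vadd :: "int \<Rightarrow> (nat \<Rightarrow> int) \<Rightarrow> (nat \<Rightarrow> int) \<Rightarrow> (nat \<Rightarrow> int)" where
  "vadd m x y = (\<lambda>i. (x i + y i) mod m)"

definition mixed_space :: "int \<Rightarrow> nat \<Rightarrow> nat \<Rightarrow> ((nat \<Rightarrow> int) \<times> (nat \<Rightarrow> int)) set" where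
  "mixed_space p \<alpha> \<beta> = vecs p \<alpha> \<times> vecs (p^2) \<beta>"

definition madd :: "int \<Rightarrow> ((nat \<Rightarrow> int) \<times> (nat \<Rightarrow> int)) \<Rightarrow> ((nat \<Rightarrow> int) \<times> (nat \<Rightarrow> int))
    \<Rightarrow> ((nat \<Rightarrow> int) \<times> (nat \<Rightarrow> int))" where
  "madd p u v = (vadd p (fst u) (fst v), vadd (p^2) (snd u) (snd v))"

definition mneg :: "int \<Rightarrow> ((nat \<Rightarrow> int) \<times> (nat \<Rightarrow> int)) \<Rightarrow> ((nat \<Rightarrow> int) \<times> (nat \<Rightarrow> int))" where
  "mneg p u = ((\<lambda>i. (- fst u i) mod p), (\<lambda>i. (- snd u i) mod (p^2)))"

definition additive_code :: "int \<Rightarrow> nat \<Rightarrow> nat \<Rightarrow> ((nat \<Rightarrow> int) \<times> (nat \<Rightarrow> int)) set \<Rightarrow> bool" where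
  "additive_code p \<alpha> \<beta> C \<longleftrightarrow> C \<subseteq> mixed_space p \<alpha> \<beta> \<and> ((\<lambda>i. 0), (\<lambda>i. 0)) \<in> C \<and>
     (\<forall>u\<in>C. \<forall>v\<in>C. madd p u v \<in> C) \<and> (\<forall>u\<in>C. mneg p u \<in> C)"

(* Gray map phi : Z_{p^2} -> Z_p^p, theta = theta'' p + theta';
   k-th coordinate (k = 0..p-1) is theta'' + theta' * k mod p *)
definition gray :: "int \<Rightarrow> int \<Rightarrow> nat \<Rightarrow> int" where
  "gray p \<theta> k = (\<theta> div p + (\<theta> mod p) * int k) mod p"

(* Phi(x,y) = (x, phi(y_1), ..., phi(y_beta)) in Z_p^(alpha + p beta), 0-indexed *)
definition Phi :: "int \<Rightarrow> nat \<Rightarrow> nat \<Rightarrow> ((nat \<Rightarrow> int) \<times> (nat \<Rightarrow> int)) \<Rightarrow> (nat \<Rightarrow> int)" where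
  "Phi p \<alpha> \<beta> u = (\<lambda>i. if i < \<alpha> then fst u i
       else if i < \<alpha> + nat p * \<beta> then gray p (snd u ((i - \<alpha>) div nat p)) ((i - \<alpha>) mod nat p)
       else 0)"

definition code_kernel :: "int \<Rightarrow> nat \<Rightarrow> (nat \<Rightarrow> int) set \<Rightarrow> (nat \<Rightarrow> int) set" where
  "code_kernel p n C = {x \<in> vecs p n. (\<lambda>c. vadd p c x) ` C = C}"

definition pP' :: "int \<Rightarrow> nat \<Rightarrow> ((nat \<Rightarrow> int) \<times> (nat \<Rightarrow> int)) \<Rightarrow> ((nat \<Rightarrow> int) \<times> (nat \<Rightarrow> int))
    \<Rightarrow> ((nat \<Rightarrow> int) \<times> (nat \<Rightarrow> int))" where
  "pP' p \<beta> u v = ((\<lambda>i. 0),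
     (\<lambda>i. if i < \<beta> \<and> snd u i mod p + snd v i mod p \<ge> p then p * (p - 1) else 0))"


end

theory Submission
  imports Defs
begin

lemma gray_repr:
  assumes "p > 0" "0 \<le> s" "s < p"
  shows "gray p (A*p+s) k = (A + s * int k) mod p"
proof -
  have "(A*p+s) div p = A" using assms by simp
  moreover have "(A*p+s) mod p = s" using assms by simp
  ultimately show ?thesis by (simp add: gray_def)
qed

lemma gray_mod:
  assumes "p > 0"
  shows "gray p (t mod p^2) k = gray p t k"
proof -
  have "t mod p^2 = (t div p mod p)*p + t mod p"
    using zmod_zmult2_eq[of p t p] assms by (simp add: power2_eq_square mult.commute)
  hence "gray p (t mod p^2) k = (t div p mod p + t mod p * int k) mod p"
    using gray_repr[of p "t mod p" "t div p mod p" k] assms by simp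
  also have "\<dots> = gray p t k" by (simp add: gray_def mod_add_left_eq)
  finally show ?thesis .
qed

lemma gray_add:
  assumes "p > 0"
  shows "gray p (((a+b) mod p^2 + (if a mod p + b mod p \<ge> p then p*(p-1) else 0)) mod p^2) k
       = (gray p a k + gray p b k) mod p"
proof -
  define c where "c = (if a mod p + b mod p \<ge> p then p*(p-1) else 0)"
  have "gray p (((a+b) mod p^2 + c) mod p^2) k = gray p ((a+b+c) mod p^2) k"
    by (simp add: mod_add_left_eq)
  also have "\<dots> = gray p (a+b+c) k" using gray_mod assms by blast
  finally have L: "gray p (((a+b) mod p^2 + c) mod p^2) k = gray p (a+b+c) k" .
  have a: "a = (a div p)*p + a mod p" and b: "b = (b div p)*p + b mod p" by simp_all
  have R: "(gray p a k + gray p b k) mod p = (a div p + b div p + (a mod p + b mod p) * int k) mod p"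
    unfolding gray_def by (simp add: mod_add_eq algebra_simps)
  have r: "0 \<le> a mod p" "a mod p < p" "0 \<le> b mod p" "b mod p < p" using assms by simp_all
  show ?thesis
  proof (cases "a mod p + b mod p \<ge> p")
    case True
    have e: "a+b+c = (a div p + b div p + p)*p + (a mod p + b mod p - p)"
      using True unfolding c_def by (subst a, subst b) (simp add: algebra_simps)
    have "gray p (a+b+c) k = (a div p + b div p + p + (a mod p + b mod p - p) * int k) mod p"
      unfolding e apply (rule gray_repr) using assms r True by linarith+
    also have "\<dots> = (a div p + b div p + (a mod p + b mod p) * int k + p * (1 - int k)) mod p"
      by (simp add: algebra_simps)
    also have "\<dots> = (a div p + b div p + (a mod p + b mod p) * int k) mod p"
      by simp
    finally show ?thesis using L R unfolding c_def by simp
  next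
    case False
    have e: "a+b+c = (a div p + b div p)*p + (a mod p + b mod p)"
      using False unfolding c_def by (subst a, subst b) (simp add: algebra_simps)
    have "gray p (a+b+c) k = (a div p + b div p + (a mod p + b mod p) * int k) mod p"
      unfolding e apply (rule gray_repr) using assms r False by linarith+
    thus ?thesis using L R unfolding c_def by simp
  qed
qed

lemma vecs_mod: "m > 0 \<Longrightarrow> x \<in> vecs m n \<Longrightarrow> x i mod m = x i"
  unfolding vecs_def by (cases "i < n") auto

lemma vadd_vecs: "m > 0 \<Longrightarrow> x \<in> vecs m n \<Longrightarrow> y \<in> vecs m n \<Longrightarrow> vadd m x y \<in> vecs m n"
  unfolding vecs_def vadd_def by auto

lemma madd_space: "p > 0 \<Longrightarrow> x \<in> mixed_space p a b \<Longrightarrow> y \<in> mixed_space p a b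
   \<Longrightarrow> madd p x y \<in> mixed_space p a b"
  unfolding mixed_space_def madd_def by (auto intro!: vadd_vecs)

lemma madd_cancel: "p > 0 \<Longrightarrow> y \<in> mixed_space p a b \<Longrightarrow> madd p (mneg p x) (madd p x y) = y"
proof -
  assume p: "p > 0" and y: "y \<in> mixed_space p a b"
  have p2: "p^2 > 0" using p by simp
  have 1: "((- fst x i) mod p + (fst x i + fst y i) mod p) mod p = fst y i" for i
  proof -
    have "((- fst x i) mod p + (fst x i + fst y i) mod p) mod p = (- fst x i + (fst x i + fst y i)) mod p"
      by (simp add: mod_add_eq)
    also have "\<dots> = fst y i mod p" by simp
    finally show ?thesis using vecs_mod[OF p, of "fst y" a i] y unfolding mixed_space_def by auto
  qed
  have 2: "((- snd x i) mod p^2 + (snd x i + snd y i) mod p^2) mod p^2 = snd y i" for i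
  proof -
    have "((- snd x i) mod p^2 + (snd x i + snd y i) mod p^2) mod p^2 = (- snd x i + (snd x i + snd y i)) mod p^2"
      by (simp add: mod_add_eq)
    also have "\<dots> = snd y i mod p^2" by simp
    finally show ?thesis using vecs_mod[OF p2, of "snd y" b i] y unfolding mixed_space_def by auto
  qed
  show ?thesis unfolding madd_def mneg_def vadd_def using 1 2 by (simp add: prod_eq_iff)
qed

lemma pP'_space: "p > 1 \<Longrightarrow> pP' p b u v \<in> mixed_space p a b"
proof -
  assume p: "p > 1"
  have "p * (p - 1) < p^2" using p by (simp add: power2_eq_square algebra_simps)
  moreover have "0 \<le> p * (p - 1)" using p by simp
  ultimately show ?thesis unfolding mixed_space_def pP'_def vecs_def using p by auto
qed

lemma Phi_vecs:
  assumes p: "p > 0" and u: "u \<in> mixed_space p a b"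
  shows "Phi p a b u \<in> vecs p (a + nat p * b)"
  using u p unfolding Phi_def vecs_def mixed_space_def gray_def by auto

lemma div_lt: "i - a < nat p * b \<Longrightarrow> (i - a) div nat p < b"
  by (simp add: less_mult_imp_div_less mult.commute)

lemma Phi_add:
  assumes p: "p > 1" and u: "u \<in> mixed_space p a b" and v: "v \<in> mixed_space p a b"
  shows "Phi p a b (madd p (madd p v u) (pP' p b u v)) = vadd p (Phi p a b v) (Phi p a b u)"
proof (rule ext)
  fix i
  show "Phi p a b (madd p (madd p v u) (pP' p b u v)) i = vadd p (Phi p a b v) (Phi p a b u) i"
  proof (cases "i < a")
    case True thus ?thesis by (simp add: Phi_def madd_def vadd_def pP'_def)
  next
    case F: False
    show ?thesis
    proof (cases "i < a + nat p * b")
      case True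
      define j where "j = (i - a) div nat p"
      have j: "j < b" unfolding j_def using True F by (intro div_lt) linarith
      have "gray p (((snd v j + snd u j) mod p^2 + (if snd u j mod p + snd v j mod p \<ge> p then p*(p-1) else 0)) mod p^2) ((i - a) mod nat p)
          = (gray p (snd v j) ((i - a) mod nat p) + gray p (snd u j) ((i - a) mod nat p)) mod p"
        using p gray_add[of p "snd v j" "snd u j" "(i - a) mod nat p"] by (simp add: add.commute[of "snd u j mod p"])
      moreover have "Phi p a b w i = gray p (snd w j) ((i - a) mod nat p)" for w
        using True F unfolding Phi_def j_def by simp
      moreover have "snd (madd p (madd p v u) (pP' p b u v)) j = ((snd v j + snd u j) mod p^2 + (if snd u j mod p + snd v j mod p \<ge> p then p*(p-1) else 0)) mod p^2"
        using j by (simp add: madd_def vadd_def pP'_def)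
      ultimately show ?thesis by (simp add: vadd_def)
    next
      case False thus ?thesis using F by (simp add: Phi_def vadd_def)
    qed
  qed
qed

lemma gray_decode:
  assumes p: "p > 0" and t: "0 \<le> t" "t < p^2"
  shows "t = p * gray p t 0 + ((gray p t 1 - gray p t 0) mod p)"
proof -
  have d: "t div p < p"
  proof (rule ccontr)
    assume "\<not> t div p < p"
    hence "p * p \<le> p * (t div p)" using p by (intro mult_left_mono) auto
    moreover have "p * (t div p) \<le> t" using p t by (metis le_add_same_cancel1 mult_div_mod_eq pos_mod_sign)
    ultimately show False using t by (simp add: power2_eq_square)
  qed
  have d0: "0 \<le> t div p" using t p by (metis pos_imp_zdiv_nonneg_iff)
  have g0: "gray p t 0 = t div p" unfolding gray_def using d d0 by simp
  have "(gray p t 1 - gray p t 0) mod p = ((t div p + t mod p) mod p - t div p) mod p"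
    unfolding g0 by (simp add: gray_def)
  also have "\<dots> = (t div p + t mod p - t div p) mod p" by (simp add: mod_diff_left_eq)
  also have "\<dots> = t mod p" by simp
  finally show ?thesis using g0 by simp
qed

lemma Phi_inj:
  assumes p: "p > 1" and u: "u \<in> mixed_space p a b" and v: "v \<in> mixed_space p a b"
    and e: "Phi p a b u = Phi p a b v"
  shows "u = v"
proof -
  have "fst u i = fst v i" for i
  proof (cases "i < a")
    case True thus ?thesis using fun_cong[OF e, of i] by (simp add: Phi_def)
  next
    case False thus ?thesis using u v unfolding mixed_space_def vecs_def by auto
  qed
  moreover have "snd u j = snd v j" for j
  proof (cases "j < b")
    case True
    have np: "nat p > 1" using p by simp
    have lt1: "a + nat p * j + 1 < a + nat p * b"
    proof -
      have "nat p * j + 1 < nat p * (j + 1)" using np by simp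
      also have "\<dots> \<le> nat p * b" using True by (intro mult_le_mono2) simp
      finally show ?thesis by simp
    qed
    have "gray p (snd u j) k = gray p (snd v j) k" if k: "k < nat p" for k
    proof -
      have lt: "a + nat p * j + k < a + nat p * b"
      proof -
        have "nat p * j + k < nat p * (j + 1)" using k by simp
        also have "\<dots> \<le> nat p * b" using True by (intro mult_le_mono2) simp
        finally show ?thesis by simp
      qed
      have q: "(nat p * j + k) div nat p = j" "(nat p * j + k) mod nat p = k" using k by auto
      show ?thesis using fun_cong[OF e, of "a + nat p * j + k"] lt q by (simp add: Phi_def)
    qed
    hence g0: "gray p (snd u j) 0 = gray p (snd v j) 0" and g1: "gray p (snd u j) 1 = gray p (snd v j) 1"
      using np by auto
    have ru: "0 \<le> snd u j" "snd u j < p^2" "0 \<le> snd v j" "snd v j < p^2"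
      using u v True unfolding mixed_space_def vecs_def by auto
    show ?thesis using gray_decode[of p "snd u j"] gray_decode[of p "snd v j"] ru g0 g1 p by simp
  next
    case False thus ?thesis using u v unfolding mixed_space_def vecs_def by auto
  qed
  ultimately show ?thesis by (simp add: prod_eq_iff fun_eq_iff)
qed

lemma translate_surj:
  assumes p: "p > 0" and x: "x \<in> vecs p n" and S: "S \<subseteq> vecs p n"
    and cl: "\<forall>c\<in>S. vadd p c x \<in> S"
  shows "(\<lambda>c. vadd p c x) ` S = S"
proof
  show "(\<lambda>c. vadd p c x) ` S \<subseteq> S" using cl by auto
next
  show "S \<subseteq> (\<lambda>c. vadd p c x) ` S"
  proof
    fix c assume c: "c \<in> S"
    define T where "T = (\<lambda>c. vadd p c x)"
    have it: "(T ^^ m) c \<in> S \<and> (T ^^ m) c = (\<lambda>i. (c i + int m * x i) mod p)" if "m > 0" for m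
      using that
    proof (induction m)
      case 0 thus ?case by simp
    next
      case (Suc m)
      show ?case
      proof (cases "m = 0")
        case True thus ?thesis using cl c by (simp add: T_def vadd_def)
      next
        case False
        with Suc.IH have ih: "(T ^^ m) c \<in> S" "(T ^^ m) c = (\<lambda>i. (c i + int m * x i) mod p)" by auto
        have "(T ^^ Suc m) c = T ((T ^^ m) c)" by simp
        also have "\<dots> = (\<lambda>i. ((c i + int m * x i) mod p + x i) mod p)" by (subst ih(2)) (simp add: T_def vadd_def)
        also have "\<dots> = (\<lambda>i. (c i + int (Suc m) * x i) mod p)" unfolding mod_add_left_eq by (simp add: algebra_simps)
        finally show ?thesis using cl ih(1) unfolding T_def by auto
      qed
    qed
    have "c = (\<lambda>i. (c i + p * x i) mod p)"
      using vecs_mod[OF p, of c n] c S by auto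
    also have "\<dots> = (T ^^ nat p) c" using it[of "nat p"] p by simp
    also have "\<dots> = T ((T ^^ (nat p - 1)) c)"
      using p by (metis Suc_diff_1 funpow.simps(2) o_apply zero_less_nat_eq)
    finally have "c = T ((T ^^ (nat p - 1)) c)" .
    moreover have "(T ^^ (nat p - 1)) c \<in> S"
      proof (cases "nat p - 1 = 0")
      case True thus ?thesis using c by simp
    next
      case False thus ?thesis using it[of "nat p - 1"] by blast
    qed
    ultimately show "c \<in> (\<lambda>c. vadd p c x) ` S" unfolding T_def by blast
  qed
qed

theorem lemma9:
  fixes p :: int and \<alpha> \<beta> :: nat and C :: "((nat \<Rightarrow> int) \<times> (nat \<Rightarrow> int)) set"
  assumes "prime p" and "p > 2" and "additive_code p \<alpha> \<beta> C"
  shows "code_kernel p (\<alpha> + nat p * \<beta>) (Phi p \<alpha> \<beta> ` C) =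
         {Phi p \<alpha> \<beta> u | u. u \<in> C \<and> (\<forall>v\<in>C. pP' p \<beta> u v \<in> C)}"
proof -
  have p1: "p > 1" and p0: "p > 0" using assms(2) by auto
  have sub: "C \<subseteq> mixed_space p \<alpha> \<beta>" and z: "((\<lambda>i. 0), (\<lambda>i. 0)) \<in> C"
    and add: "\<forall>u\<in>C. \<forall>v\<in>C. madd p u v \<in> C" and neg: "\<forall>u\<in>C. mneg p u \<in> C"
    using assms(3) unfolding additive_code_def by auto
  have Sv: "Phi p \<alpha> \<beta> ` C \<subseteq> vecs p (\<alpha> + nat p * \<beta>)" using sub Phi_vecs[OF p0] by auto
  show ?thesis
  proof (intro equalityI subsetI)
    fix x assume "x \<in> code_kernel p (\<alpha> + nat p * \<beta>) (Phi p \<alpha> \<beta> ` C)"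
    hence x: "x \<in> vecs p (\<alpha> + nat p * \<beta>)" and K: "(\<lambda>c. vadd p c x) ` (Phi p \<alpha> \<beta> ` C) = Phi p \<alpha> \<beta> ` C"
      unfolding code_kernel_def by auto
    have "Phi p \<alpha> \<beta> ((\<lambda>i. 0), (\<lambda>i. 0)) = (\<lambda>i. 0)" by (simp add: Phi_def gray_def fun_eq_iff)
    hence "vadd p (\<lambda>i. 0) x \<in> Phi p \<alpha> \<beta> ` C" using K z by (metis image_eqI)
    moreover have "vadd p (\<lambda>i. 0) x = x" using vecs_mod[OF p0 x] by (simp add: vadd_def)
    ultimately obtain u where u: "u \<in> C" and xu: "x = Phi p \<alpha> \<beta> u" by auto
    have "pP' p \<beta> u v \<in> C" if v: "v \<in> C" for v
    proof -
      have "vadd p (Phi p \<alpha> \<beta> v) x \<in> Phi p \<alpha> \<beta> ` C" using K v by blast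
      then obtain w where w: "w \<in> C" and e: "vadd p (Phi p \<alpha> \<beta> v) x = Phi p \<alpha> \<beta> w" by auto
      let ?s = "madd p (madd p v u) (pP' p \<beta> u v)"
      have us: "u \<in> mixed_space p \<alpha> \<beta>" and vs: "v \<in> mixed_space p \<alpha> \<beta>" using u v sub by auto
      have ss: "?s \<in> mixed_space p \<alpha> \<beta>"
        using us vs p0 p1 by (intro madd_space pP'_space) auto
      have "Phi p \<alpha> \<beta> ?s = Phi p \<alpha> \<beta> w" using Phi_add[OF p1 us vs] e xu by simp
      hence ws: "w = ?s" using Phi_inj[OF p1 ss, of w] w sub by auto
      have "pP' p \<beta> u v = madd p (mneg p (madd p v u)) w"
        unfolding ws using madd_cancel[OF p0 pP'_space[OF p1]] by simp
      also have "\<dots> \<in> C" using add neg u v w by blast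
      finally show ?thesis .
    qed
    thus "x \<in> {Phi p \<alpha> \<beta> u | u. u \<in> C \<and> (\<forall>v\<in>C. pP' p \<beta> u v \<in> C)}" using u xu by blast
  next
    fix x assume "x \<in> {Phi p \<alpha> \<beta> u | u. u \<in> C \<and> (\<forall>v\<in>C. pP' p \<beta> u v \<in> C)}"
    then obtain u where u: "u \<in> C" and P: "\<forall>v\<in>C. pP' p \<beta> u v \<in> C" and xu: "x = Phi p \<alpha> \<beta> u" by auto
    have us: "u \<in> mixed_space p \<alpha> \<beta>" using u sub by auto
    have x: "x \<in> vecs p (\<alpha> + nat p * \<beta>)" using xu Phi_vecs[OF p0 us] by simp
    have "\<forall>c\<in>Phi p \<alpha> \<beta> ` C. vadd p c x \<in> Phi p \<alpha> \<beta> ` C"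
    proof
      fix c assume "c \<in> Phi p \<alpha> \<beta> ` C"
      then obtain v where v: "v \<in> C" and cv: "c = Phi p \<alpha> \<beta> v" by auto
      have vs: "v \<in> mixed_space p \<alpha> \<beta>" using v sub by auto
      have "vadd p c x = Phi p \<alpha> \<beta> (madd p (madd p v u) (pP' p \<beta> u v))"
        using Phi_add[OF p1 us vs] cv xu by simp
      moreover have "madd p (madd p v u) (pP' p \<beta> u v) \<in> C" using add P u v by blast
      ultimately show "vadd p c x \<in> Phi p \<alpha> \<beta> ` C" by blast
    qed
    hence "(\<lambda>c. vadd p c x) ` (Phi p \<alpha> \<beta> ` C) = Phi p \<alpha> \<beta> ` C"
      using translate_surj[OF p0 x Sv] by blast
    thus "x \<in> code_kernel p (\<alpha> + nat p * \<beta>) (Phi p \<alpha> \<beta> ` C)" unfolding code_kernel_def using x by blast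
  qed
qed

end
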